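(* Assume the Setup below with $G=G_\circ$ (so that $E_G=E_\circ$ and $\mathscr{G}=\mathscr{G}_\circ$), that $G_\circ$ is a dynamic causal graph for $(Y_1,Y_0)$ given $\mathscr{G}_\circ$, and that $v^2>0$ almost surely. Then: (a) If the Unconfoundedness Condition (A) holds, then $D=C_G$ almost surely. (b) If the Unconfoundedness Condition (B) holds, the Irreversibility Condition holds, and $\mu_{i,0}<1$ almost surely for every $i\in N$, then $D^{\mathsf I}=C_G^{\mathsf I}$ almost surely.
   Context: Setup. $N$ is a finite set of units, $n=|N|$. For $i\in N$ and $t\in\{0,1\}$, $Y_{i,t}\in\{0,1\}$ are binary outcomes; $Y_1=(Y_{i,1})_{i\in N}$, $Y_0=(Y_{j,0})_{j\in N}$, and for $A\subset N$, $Y_{A,t}=(Y_{i,t})_{i\in A}$. $G_\circ=(N,E_\circ)$ is a (possibly latent) directed graph with $E_\circ\subset\{ij:i,j\in N,i\neq j\}$ (an edge $ij$ means $Y_{j,0}$ causally affects $Y_{i,1}$); $G=(N,E_G)$ is an observed directed graph with $E_G\subset\{ij:i\ne j\}$. Write $N_\circ(i)=\{j:ij\in E_\circ\}$, $\overline N_\circ(i)=N_\circ(i)\cup\{i\}$, $N_\circ(A)=\bigcup_{i\in A}N_\circ(i)$, $\overline N_\circ(A)=N_\circ(A)\cup A$, $d_\circ(i)=|N_\circ(i)|$, and similarly $N_G(i)=\{j:ij\in E_G\}$, $\overline N_G(i)=N_G(i)\cup\{i\}$. $X=(X_i)_{i\in N}$, $X_i\in\mathbb R^p$, are observed covariates.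 $\mathscr G=\sigma(X,G)$ and $\mathscr G_\circ=\sigma(X,G,G_\circ)$; $\mathbf E_{\mathscr H},\mathrm{Var}_{\mathscr H},\mathrm{Cov}_{\mathscr H}$ denote conditional expectation/variance/covariance given a $\sigma$-field $\mathscr H$. Dynamic causal graph: $G_\circ$ is a dynamic causal graph for $(Y_1,Y_0)$ given $\mathscr G_\circ$ if for any pairwise disjoint $A,B,A',B'\subset N$ with $(\overline N_\circ(A)\cup B)\cap(\overline N_\circ(A')\cup B')=\varnothing$, the vectors $(Y_{A,1},Y_{B\cup\overline N_\circ(A),0})$ and $(Y_{A',1},Y_{B'\cup\overline N_\circ(A'),0})$ are conditionally independent given $\mathscr G_\circ$. Potential outcomes: for each $i$, writing $N_\circ(i)=\{j_1,\dots,j_{d_\circ(i)}\}$, there is a map $\rho_i(\cdot;U_{i,1}):\{0,1\}^{d_\circ(i)+1}\to\{0,1\}$ with $U_{i,1}$ a random vector, and $Y_{i,1}=\rho_i(Y_{i,0},Y_{j_1,0},\dots,Y_{j_{d_\circ(i)},0};U_{i,1})$. For $j_k\in N_\circ(i)$ and $d\in\{0,1\}$, $Y^*_{ij_k}(d)=\rho_i(Y_{i,0},Y_{j_1,0},\dots,Y_{j_{k-1},0},d,Y_{j_{k+1},0},\dots,Y_{j_{d_\circ(i)},0};U_{i,1})$. Parameters: $\mu_{j,0}=\mathbf E_{\mathscr G_\circ}[Y_{j,0}]$, $v^2=\frac1n\sum_{j\in N}\mu_{j,0}(1-\mu_{j,0})$, $w_j=\mu_{j,0}(1-\mu_{j,0})/\sum_{\ell\in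 N}\mu_{\ell,0}(1-\mu_{\ell,0})$. $\tau_j=\sum_{i:ij\in E_\circ}\mathbf E_{\mathscr G_\circ}[Y^*_{ij}(1)-Y^*_{ij}(0)]$ and $D=\sum_{j\in N}w_j\tau_j$. For $\mu_{i,0}<1$ write $\mathbf E[Z\mid Y_{i,0}=0,\mathscr G_\circ]:=\mathbf E_{\mathscr G_\circ}[Z(1-Y_{i,0})]/(1-\mu_{i,0})$; $\tau^{\mathsf I}_j=\sum_{i:ij\in E_\circ}\mathbf E[Y^*_{ij}(1)-Y^*_{ij}(0)\mid Y_{i,0}=0,\mathscr G_\circ]$ and $D^{\mathsf I}=\sum_j w_j\tau_j^{\mathsf I}$. Further $C_G=\frac{1}{nv^2}\sum_{i\in N}\sum_{j:ij\in E_G}\mathrm{Cov}_{\mathscr G_\circ}(Y_{i,1},Y_{j,0})$ and $C_G^{\mathsf I}=\frac{1}{nv^2}\sum_{i\in N}\sum_{j:ij\in E_G}\mathrm{Cov}_{\mathscr G_\circ}\big(\tfrac{Y_{i,1}}{1-\mu_{i,0}},Y_{j,0}\big)$. Unconfoundedness Condition (A): for each $ij\in E_\circ$, $(Y^*_{ij}(1),Y^*_{ij}(0),G_\circ)$ is conditionally independent of $Y_{j,0}$ given $\mathscr G$. Unconfoundedness Condition (B): for each $ij\in E_\circ$, $(Y^*_{ij}(1),Y^*_{ij}(0),G_\circ)$ is conditionally independent of $Y_{j,0}$ given $(\mathscr G,Y_{i,0})$. Irreversibility Condition: for every $i$, with probability one $\rho_i(1,d_{j_1},\dots,d_{j_{d_\circ(i)}};U_{i,1})=0$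 for all $(d_{j_1},\dots,d_{j_{d_\circ(i)}})$. *)

theory Defs
  imports "HOL-Probability.Probability"
begin

(* Everything below is stated "conditionally on G_circ": the graph E (= E_G = E_circ),
   the covariates and the unit set are fixed, and the probability space M plays the
   role of the (regular) conditional distribution given G_circ. *)

text \<open>Out-neighbourhoods: an edge (i,j) means Y_{j,0} causally affects Y_{i,1}.\<close>
definition nbr :: "('a \<times> 'a) set \<Rightarrow> 'a \<Rightarrow> 'a set" where
  "nbr E i = {j. (i, j) \<in> E}"

definition cnbr :: "('a \<times> 'a) set \<Rightarrow> 'a \<Rightarrow> 'a set" where
  "cnbr E i = insert i (nbr E i)"

definition cnbrs :: "('a \<times> 'a) set \<Rightarrow> 'a set \<Rightarrow> 'a set" where
  "cnbrs E A = (\<Union>i\<in>A. nbr E i) \<union> A"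

definition dynamic_causal_graph ::
  "'w measure \<Rightarrow> 'a set \<Rightarrow> ('a \<times> 'a) set \<Rightarrow> ('a \<Rightarrow> 'w \<Rightarrow> bool) \<Rightarrow> ('a \<Rightarrow> 'w \<Rightarrow> bool) \<Rightarrow> bool" where
  "dynamic_causal_graph M N E Y1 Y0 \<longleftrightarrow>
     (\<forall>A B A' B'. A \<subseteq> N \<and> B \<subseteq> N \<and> A' \<subseteq> N \<and> B' \<subseteq> N \<and>
        A \<inter> B = {} \<and> A \<inter> A' = {} \<and> A \<inter> B' = {} \<and> B \<inter> A' = {} \<and> B \<inter> B' = {} \<and> A' \<inter> B' = {} \<and>
        (cnbrs E A \<union> B) \<inter> (cnbrs E A' \<union> B') = {} \<longrightarrow>
        prob_space.indep_var M
          (count_space UNIV) (\<lambda>\<omega>. (restrict (\<lambda>i. Y1 i \<omega>) A, restrict (\<lambda>j. Y0 j \<omega>) (B \<union> cnbrs E A)))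
          (count_space UNIV) (\<lambda>\<omega>. (restrict (\<lambda>i. Y1 i \<omega>) A', restrict (\<lambda>j. Y0 j \<omega>) (B' \<union> cnbrs E A'))))"

definition ystar :: "('a \<Rightarrow> ('a \<Rightarrow> bool) \<Rightarrow> 'w \<Rightarrow> bool) \<Rightarrow> ('a \<Rightarrow> 'w \<Rightarrow> bool) \<Rightarrow> 'a \<Rightarrow> 'a \<Rightarrow> bool \<Rightarrow> 'w \<Rightarrow> bool" where
  "ystar rho Y0 i j d \<omega> = rho i ((\<lambda>k. Y0 k \<omega>)(j := d)) \<omega>"

definition cov :: "'w measure \<Rightarrow> ('w \<Rightarrow> real) \<Rightarrow> ('w \<Rightarrow> real) \<Rightarrow> real" where
  "cov M X Z = (\<integral>\<omega>. (X \<omega> - (\<integral>x. X x \<partial>M)) * (Z \<omega> - (\<integral>x. Z x \<partial>M)) \<partial>M)"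

definition mu0 :: "'w measure \<Rightarrow> ('a \<Rightarrow> 'w \<Rightarrow> bool) \<Rightarrow> 'a \<Rightarrow> real" where
  "mu0 M Y0 j = (\<integral>\<omega>. of_bool (Y0 j \<omega>) \<partial>M)"

definition vsq :: "'w measure \<Rightarrow> 'a set \<Rightarrow> ('a \<Rightarrow> 'w \<Rightarrow> bool) \<Rightarrow> real" where
  "vsq M N Y0 = (1 / real (card N)) * (\<Sum>j\<in>N. mu0 M Y0 j * (1 - mu0 M Y0 j))"

definition wt :: "'w measure \<Rightarrow> 'a set \<Rightarrow> ('a \<Rightarrow> 'w \<Rightarrow> bool) \<Rightarrow> 'a \<Rightarrow> real" where
  "wt M N Y0 j = mu0 M Y0 j * (1 - mu0 M Y0 j) / (\<Sum>l\<in>N. mu0 M Y0 l * (1 - mu0 M Y0 l))"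

definition tau :: "'w measure \<Rightarrow> 'a set \<Rightarrow> ('a \<times> 'a) set \<Rightarrow> ('a \<Rightarrow> ('a \<Rightarrow> bool) \<Rightarrow> 'w \<Rightarrow> bool) \<Rightarrow> ('a \<Rightarrow> 'w \<Rightarrow> bool) \<Rightarrow> 'a \<Rightarrow> real" where
  "tau M N E rho Y0 j = (\<Sum>i\<in>{i\<in>N. (i, j) \<in> E}.
      \<integral>\<omega>. of_bool (ystar rho Y0 i j True \<omega>) - of_bool (ystar rho Y0 i j False \<omega>) \<partial>M)"

definition DD :: "'w measure \<Rightarrow> 'a set \<Rightarrow> ('a \<times> 'a) set \<Rightarrow> ('a \<Rightarrow> ('a \<Rightarrow> bool) \<Rightarrow> 'w \<Rightarrow> bool) \<Rightarrow> ('a \<Rightarrow> 'w \<Rightarrow> bool) \<Rightarrow> real" where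
  "DD M N E rho Y0 = (\<Sum>j\<in>N. wt M N Y0 j * tau M N E rho Y0 j)"

text \<open>E[Z | Y_{i,0} = 0] := E[Z (1 - Y_{i,0})] / (1 - mu_{i,0}).\<close>
definition tauI :: "'w measure \<Rightarrow> 'a set \<Rightarrow> ('a \<times> 'a) set \<Rightarrow> ('a \<Rightarrow> ('a \<Rightarrow> bool) \<Rightarrow> 'w \<Rightarrow> bool) \<Rightarrow> ('a \<Rightarrow> 'w \<Rightarrow> bool) \<Rightarrow> 'a \<Rightarrow> real" where
  "tauI M N E rho Y0 j = (\<Sum>i\<in>{i\<in>N. (i, j) \<in> E}.
      (\<integral>\<omega>. (of_bool (ystar rho Y0 i j True \<omega>) - of_bool (ystar rho Y0 i j False \<omega>))
              * (1 - of_bool (Y0 i \<omega>)) \<partial>M) / (1 - mu0 M Y0 i))"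

definition DI :: "'w measure \<Rightarrow> 'a set \<Rightarrow> ('a \<times> 'a) set \<Rightarrow> ('a \<Rightarrow> ('a \<Rightarrow> bool) \<Rightarrow> 'w \<Rightarrow> bool) \<Rightarrow> ('a \<Rightarrow> 'w \<Rightarrow> bool) \<Rightarrow> real" where
  "DI M N E rho Y0 = (\<Sum>j\<in>N. wt M N Y0 j * tauI M N E rho Y0 j)"

definition CG :: "'w measure \<Rightarrow> 'a set \<Rightarrow> ('a \<times> 'a) set \<Rightarrow> ('a \<Rightarrow> 'w \<Rightarrow> bool) \<Rightarrow> ('a \<Rightarrow> 'w \<Rightarrow> bool) \<Rightarrow> real" where
  "CG M N E Y1 Y0 = (1 / (real (card N) * vsq M N Y0)) *
     (\<Sum>i\<in>N. \<Sum>j\<in>{j. (i, j) \<in> E}. cov M (\<lambda>\<omega>. of_bool (Y1 i \<omega>)) (\<lambda>\<omega>. of_bool (Y0 j \<omega>)))"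

definition CGI :: "'w measure \<Rightarrow> 'a set \<Rightarrow> ('a \<times> 'a) set \<Rightarrow> ('a \<Rightarrow> 'w \<Rightarrow> bool) \<Rightarrow> ('a \<Rightarrow> 'w \<Rightarrow> bool) \<Rightarrow> real" where
  "CGI M N E Y1 Y0 = (1 / (real (card N) * vsq M N Y0)) *
     (\<Sum>i\<in>N. \<Sum>j\<in>{j. (i, j) \<in> E}.
        cov M (\<lambda>\<omega>. of_bool (Y1 i \<omega>) / (1 - mu0 M Y0 i)) (\<lambda>\<omega>. of_bool (Y0 j \<omega>)))"

definition indep2 :: "'w measure \<Rightarrow> ('w \<Rightarrow> 'b) \<Rightarrow> ('w \<Rightarrow> 'c) \<Rightarrow> bool" where
  "indep2 M X Z \<longleftrightarrow>
     (\<forall>S T. measure M {\<omega>\<in>space M. X \<omega> \<in> S \<and> Z \<omega> \<in> T}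
        = measure M {\<omega>\<in>space M. X \<omega> \<in> S} * measure M {\<omega>\<in>space M. Z \<omega> \<in> T})"

definition cond_indep_bool :: "'w measure \<Rightarrow> ('w \<Rightarrow> 'b) \<Rightarrow> ('w \<Rightarrow> 'c) \<Rightarrow> ('w \<Rightarrow> bool) \<Rightarrow> bool" where
  "cond_indep_bool M X Z W \<longleftrightarrow>
     (\<forall>b S T. measure M {\<omega>\<in>space M. X \<omega> \<in> S \<and> Z \<omega> \<in> T \<and> W \<omega> = b} * measure M {\<omega>\<in>space M. W \<omega> = b}
        = measure M {\<omega>\<in>space M. X \<omega> \<in> S \<and> W \<omega> = b} * measure M {\<omega>\<in>space M. Z \<omega> \<in> T \<and> W \<omega> = b})"

end

theory Submission
  imports Defs
begin

context prob_space begin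

lemma exp_bool:
  assumes "Measurable.pred M P"
  shows "(\<integral>\<omega>. of_bool (P \<omega>) \<partial>M) = prob {\<omega>\<in>space M. P \<omega>}"
proof -
  have "(\<integral>\<omega>. of_bool (P \<omega>) \<partial>M) = (\<integral>\<omega>. indicator {\<omega>\<in>space M. P \<omega>} \<omega> \<partial>M)"
    by (rule Bochner_Integration.integral_cong) (auto simp: indicator_def)
  also have "\<dots> = prob {\<omega>\<in>space M. P \<omega>}" by (simp add: Int_absorb2)
  finally show ?thesis .
qed

lemma integrable_bool:
  assumes "Measurable.pred M P"
  shows "integrable M (\<lambda>\<omega>. of_bool (P \<omega>) :: real)"
proof -
  show ?thesis by (rule integrable_const_bound[where B=1]) (use assms in measurable)
qed

lemma cov_bool:
  assumes Y: "Measurable.pred M Y" and Z: "Measurable.pred M Z"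
  shows "cov M (\<lambda>\<omega>. of_bool (Y \<omega>)) (\<lambda>\<omega>. of_bool (Z \<omega>))
     = prob {\<omega>\<in>space M. Y \<omega> \<and> Z \<omega>} - prob {\<omega>\<in>space M. Y \<omega>} * prob {\<omega>\<in>space M. Z \<omega>}"
proof -
  define a where "a = (\<integral>\<omega>. of_bool (Y \<omega>) \<partial>M :: real)"
  define b where "b = (\<integral>\<omega>. of_bool (Z \<omega>) \<partial>M :: real)"
  have YZ: "Measurable.pred M (\<lambda>\<omega>. Y \<omega> \<and> Z \<omega>)" using Y Z by measurable
  have "cov M (\<lambda>\<omega>. of_bool (Y \<omega>)) (\<lambda>\<omega>. of_bool (Z \<omega>))
     = (\<integral>\<omega>. of_bool (Y \<omega> \<and> Z \<omega>) - (b * of_bool (Y \<omega>) + a * of_bool (Z \<omega>) - a * b) \<partial>M)"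
    unfolding cov_def a_def[symmetric] b_def[symmetric]
    by (rule Bochner_Integration.integral_cong) (auto simp: algebra_simps)
  also have "\<dots> = (\<integral>\<omega>. of_bool (Y \<omega> \<and> Z \<omega>) \<partial>M) - (b * a + a * b - a * b)"
    using integrable_bool[OF Y] integrable_bool[OF Z] integrable_bool[OF YZ]
    by (simp add: a_def b_def prob_space)
  also have "\<dots> = prob {\<omega>\<in>space M. Y \<omega> \<and> Z \<omega>} - a * b"
    using exp_bool[OF YZ] by simp
  finally show ?thesis using exp_bool[OF Y] exp_bool[OF Z] a_def b_def by simp
qed

lemma cov_div: "cov M (\<lambda>\<omega>. X \<omega> / c) Z = cov M X Z / c"
proof -
  have "cov M (\<lambda>\<omega>. X \<omega> / c) Z = (\<integral>\<omega>. ((X \<omega> - (\<integral>x. X x \<partial>M)) * (Z \<omega> - (\<integral>x. Z x \<partial>M))) / c \<partial>M)"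
    unfolding cov_def by (simp add: diff_divide_distrib[symmetric])
  also have "\<dots> = cov M X Z / c" unfolding cov_def by simp
  finally show ?thesis .
qed

lemma ev: "Measurable.pred M P \<Longrightarrow> {\<omega>\<in>space M. P \<omega>} \<in> events"
  by (simp add: pred_def)

lemma edge_a:
  assumes A: "Measurable.pred M A" and B: "Measurable.pred M B" and Z: "Measurable.pred M Z"
    and Y: "\<And>\<omega>. \<omega>\<in>space M \<Longrightarrow> Y \<omega> = (if Z \<omega> then A \<omega> else B \<omega>)"
    and ind: "indep2 M (\<lambda>\<omega>. (A \<omega>, B \<omega>)) Z"
  shows "cov M (\<lambda>\<omega>. of_bool (Y \<omega>)) (\<lambda>\<omega>. of_bool (Z \<omega>))
    = (\<integral>\<omega>. of_bool (Z \<omega>) \<partial>M) * (1 - (\<integral>\<omega>. of_bool (Z \<omega>) \<partial>M))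
      * (\<integral>\<omega>. of_bool (A \<omega>) - of_bool (B \<omega>) \<partial>M)"
proof -
  have Y': "Measurable.pred M (\<lambda>\<omega>. (Z \<omega> \<and> A \<omega>) \<or> (\<not> Z \<omega> \<and> B \<omega>))" using A B Z by measurable
  have PY: "Measurable.pred M Y"
    using Y' by (rule measurable_cong[THEN iffD1, rotated]) (simp add: Y)
  have AZ: "Measurable.pred M (\<lambda>\<omega>. A \<omega> \<and> Z \<omega>)" using A Z by measurable
  have BnZ: "Measurable.pred M (\<lambda>\<omega>. B \<omega> \<and> \<not> Z \<omega>)" using B Z by measurable
  have nZ: "Measurable.pred M (\<lambda>\<omega>. \<not> Z \<omega>)" using Z by measurable
  have c: "cov M (\<lambda>\<omega>. of_bool (Y \<omega>)) (\<lambda>\<omega>. of_bool (Z \<omega>))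
     = prob {\<omega>\<in>space M. Y \<omega> \<and> Z \<omega>} - prob {\<omega>\<in>space M. Y \<omega>} * prob {\<omega>\<in>space M. Z \<omega>}"
    by (rule cov_bool[OF PY Z])
  have e1: "{\<omega>\<in>space M. Y \<omega> \<and> Z \<omega>} = {\<omega>\<in>space M. A \<omega> \<and> Z \<omega>}" using Y by auto
  have e2: "{\<omega>\<in>space M. Y \<omega>} = {\<omega>\<in>space M. A \<omega> \<and> Z \<omega>} \<union> {\<omega>\<in>space M. B \<omega> \<and> \<not> Z \<omega>}"
    using Y by (auto split: if_splits)
  have p2: "prob {\<omega>\<in>space M. Y \<omega>} = prob {\<omega>\<in>space M. A \<omega> \<and> Z \<omega>} + prob {\<omega>\<in>space M. B \<omega> \<and> \<not> Z \<omega>}"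
    unfolding e2 by (rule finite_measure_Union[OF ev[OF AZ] ev[OF BnZ]]) auto
  have i1: "prob {\<omega>\<in>space M. A \<omega> \<and> Z \<omega>} = prob {\<omega>\<in>space M. A \<omega>} * prob {\<omega>\<in>space M. Z \<omega>}"
    using ind[unfolded indep2_def, rule_format, of "{p. fst p}" "{True}"] by simp
  have i2: "prob {\<omega>\<in>space M. B \<omega> \<and> \<not> Z \<omega>} = prob {\<omega>\<in>space M. B \<omega>} * prob {\<omega>\<in>space M. \<not> Z \<omega>}"
    using ind[unfolded indep2_def, rule_format, of "{p. snd p}" "{False}"] by simp
  have cz: "prob {\<omega>\<in>space M. \<not> Z \<omega>} = 1 - prob {\<omega>\<in>space M. Z \<omega>}"
  proof -
    have "{\<omega>\<in>space M. \<not> Z \<omega>} = space M - {\<omega>\<in>space M. Z \<omega>}" by auto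
    then show ?thesis using prob_compl[OF ev[OF Z]] by simp
  qed
  have d: "(\<integral>\<omega>. of_bool (A \<omega>) - of_bool (B \<omega>) \<partial>M) = prob {\<omega>\<in>space M. A \<omega>} - prob {\<omega>\<in>space M. B \<omega>}"
    using integrable_bool[OF A] integrable_bool[OF B] exp_bool[OF A] exp_bool[OF B] by simp
  show ?thesis
    unfolding c e1 p2 i1 i2 cz d exp_bool[OF Z] by (simp add: algebra_simps)
qed

lemma edge_b:
  assumes A: "Measurable.pred M A" and B: "Measurable.pred M B" and Z: "Measurable.pred M Z"
    and W: "Measurable.pred M W"
    and Y: "\<And>\<omega>. \<omega>\<in>space M \<Longrightarrow> Y \<omega> = (if Z \<omega> then A \<omega> else B \<omega>)"
    and ci: "cond_indep_bool M (\<lambda>\<omega>. (A \<omega>, B \<omega>)) Z W"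
    and irr: "AE \<omega> in M. W \<omega> \<longrightarrow> \<not> A \<omega> \<and> \<not> B \<omega>"
    and iZW: "prob {\<omega>\<in>space M. Z \<omega> \<and> \<not> W \<omega>} = prob {\<omega>\<in>space M. Z \<omega>} * prob {\<omega>\<in>space M. \<not> W \<omega>}"
    and lt: "(\<integral>\<omega>. of_bool (W \<omega>) \<partial>M) < (1::real)"
  shows "cov M (\<lambda>\<omega>. of_bool (Y \<omega>) / (1 - (\<integral>\<omega>. of_bool (W \<omega>) \<partial>M))) (\<lambda>\<omega>. of_bool (Z \<omega>))
    = (\<integral>\<omega>. of_bool (Z \<omega>) \<partial>M) * (1 - (\<integral>\<omega>. of_bool (Z \<omega>) \<partial>M))
      * ((\<integral>\<omega>. (of_bool (A \<omega>) - of_bool (B \<omega>)) * (1 - of_bool (W \<omega>)) \<partial>M)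
         / (1 - (\<integral>\<omega>. of_bool (W \<omega>) \<partial>M)))"
proof -
  define q where "q = prob {\<omega>\<in>space M. \<not> W \<omega>}"
  define m where "m = prob {\<omega>\<in>space M. Z \<omega>}"
  define \<alpha> where "\<alpha> = prob {\<omega>\<in>space M. A \<omega> \<and> \<not> W \<omega>}"
  define \<beta> where "\<beta> = prob {\<omega>\<in>space M. B \<omega> \<and> \<not> W \<omega>}"
  have nW: "Measurable.pred M (\<lambda>\<omega>. \<not> W \<omega>)" using W by measurable
  have qW: "1 - (\<integral>\<omega>. of_bool (W \<omega>) \<partial>M) = q"
  proof -
    have "{\<omega>\<in>space M. \<not> W \<omega>} = space M - {\<omega>\<in>space M. W \<omega>}" by auto
    then show ?thesis using prob_compl[OF ev[OF W]] exp_bool[OF W] q_def by simp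
  qed
  have qpos: "q > 0" using lt qW by linarith
  have Y': "Measurable.pred M (\<lambda>\<omega>. (Z \<omega> \<and> A \<omega>) \<or> (\<not> Z \<omega> \<and> B \<omega>))" using A B Z by measurable
  have PY: "Measurable.pred M Y"
    using Y' by (rule measurable_cong[THEN iffD1, rotated]) (simp add: Y)
  have AZ: "Measurable.pred M (\<lambda>\<omega>. A \<omega> \<and> Z \<omega>)" using A Z by measurable
  have AZW: "Measurable.pred M (\<lambda>\<omega>. A \<omega> \<and> Z \<omega> \<and> \<not> W \<omega>)" using A Z W by measurable
  have BnZ: "Measurable.pred M (\<lambda>\<omega>. B \<omega> \<and> \<not> Z \<omega>)" using B Z by measurable
  have BnZW: "Measurable.pred M (\<lambda>\<omega>. B \<omega> \<and> \<not> Z \<omega> \<and> \<not> W \<omega>)" using B Z W by measurable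
  have ZW: "Measurable.pred M (\<lambda>\<omega>. Z \<omega> \<and> \<not> W \<omega>)" using Z W by measurable
  have nZW: "Measurable.pred M (\<lambda>\<omega>. \<not> Z \<omega> \<and> \<not> W \<omega>)" using Z W by measurable
  have AW: "Measurable.pred M (\<lambda>\<omega>. A \<omega> \<and> \<not> W \<omega>)" using A W by measurable
  have BW: "Measurable.pred M (\<lambda>\<omega>. B \<omega> \<and> \<not> W \<omega>)" using B W by measurable
  have c: "cov M (\<lambda>\<omega>. of_bool (Y \<omega>)) (\<lambda>\<omega>. of_bool (Z \<omega>))
     = prob {\<omega>\<in>space M. Y \<omega> \<and> Z \<omega>} - prob {\<omega>\<in>space M. Y \<omega>} * prob {\<omega>\<in>space M. Z \<omega>}"
    by (rule cov_bool[OF PY Z])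
  have e1: "{\<omega>\<in>space M. Y \<omega> \<and> Z \<omega>} = {\<omega>\<in>space M. A \<omega> \<and> Z \<omega>}" using Y by auto
  have e2: "{\<omega>\<in>space M. Y \<omega>} = {\<omega>\<in>space M. A \<omega> \<and> Z \<omega>} \<union> {\<omega>\<in>space M. B \<omega> \<and> \<not> Z \<omega>}"
    using Y by (auto split: if_splits)
  have p2: "prob {\<omega>\<in>space M. Y \<omega>} = prob {\<omega>\<in>space M. A \<omega> \<and> Z \<omega>} + prob {\<omega>\<in>space M. B \<omega> \<and> \<not> Z \<omega>}"
    unfolding e2 by (rule finite_measure_Union[OF ev[OF AZ] ev[OF BnZ]]) auto
  have a1: "prob {\<omega>\<in>space M. A \<omega> \<and> Z \<omega>} = prob {\<omega>\<in>space M. A \<omega> \<and> Z \<omega> \<and> \<not> W \<omega>}"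
    by (rule measure_eq_AE[OF _ ev[OF AZ] ev[OF AZW]]) (use irr in auto)
  have a2: "prob {\<omega>\<in>space M. B \<omega> \<and> \<not> Z \<omega>} = prob {\<omega>\<in>space M. B \<omega> \<and> \<not> Z \<omega> \<and> \<not> W \<omega>}"
    by (rule measure_eq_AE[OF _ ev[OF BnZ] ev[OF BnZW]]) (use irr in auto)
  have c1: "prob {\<omega>\<in>space M. A \<omega> \<and> Z \<omega> \<and> \<not> W \<omega>} * q = \<alpha> * prob {\<omega>\<in>space M. Z \<omega> \<and> \<not> W \<omega>}"
    using ci[unfolded cond_indep_bool_def, rule_format, where b=False and S="{p. fst p}" and T="{True}"]
    by (simp add: q_def \<alpha>_def)
  have c2: "prob {\<omega>\<in>space M. B \<omega> \<and> \<not> Z \<omega> \<and> \<not> W \<omega>} * q = \<beta> * prob {\<omega>\<in>space M. \<not> Z \<omega> \<and> \<not> W \<omega>}"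
    using ci[unfolded cond_indep_bool_def, rule_format, where b=False and S="{p. snd p}" and T="{False}"]
    by (simp add: q_def \<beta>_def)
  have zw: "prob {\<omega>\<in>space M. Z \<omega> \<and> \<not> W \<omega>} = m * q" using iZW m_def q_def by simp
  have nzw: "prob {\<omega>\<in>space M. \<not> Z \<omega> \<and> \<not> W \<omega>} = (1 - m) * q"
  proof -
    have "{\<omega>\<in>space M. \<not> W \<omega>} = {\<omega>\<in>space M. Z \<omega> \<and> \<not> W \<omega>} \<union> {\<omega>\<in>space M. \<not> Z \<omega> \<and> \<not> W \<omega>}" by auto
    then have "q = prob {\<omega>\<in>space M. Z \<omega> \<and> \<not> W \<omega>} + prob {\<omega>\<in>space M. \<not> Z \<omega> \<and> \<not> W \<omega>}"
      unfolding q_def using finite_measure_Union[OF ev[OF ZW] ev[OF nZW]] by auto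
    then show ?thesis using zw by (simp add: algebra_simps)
  qed
  have r1: "prob {\<omega>\<in>space M. A \<omega> \<and> Z \<omega> \<and> \<not> W \<omega>} = \<alpha> * m"
  proof -
    have "prob {\<omega>\<in>space M. A \<omega> \<and> Z \<omega> \<and> \<not> W \<omega>} * q = (\<alpha> * m) * q" using c1 zw by simp
    then show ?thesis using qpos by simp
  qed
  have r2: "prob {\<omega>\<in>space M. B \<omega> \<and> \<not> Z \<omega> \<and> \<not> W \<omega>} = \<beta> * (1 - m)"
  proof -
    have "prob {\<omega>\<in>space M. B \<omega> \<and> \<not> Z \<omega> \<and> \<not> W \<omega>} * q = (\<beta> * (1 - m)) * q" using c2 nzw by simp
    then show ?thesis using qpos by simp
  qed
  have d: "(\<integral>\<omega>. (of_bool (A \<omega>) - of_bool (B \<omega>)) * (1 - of_bool (W \<omega>)) \<partial>M) = (\<alpha> - \<beta> :: real)"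
  proof -
    have "(\<integral>\<omega>. (of_bool (A \<omega>) - of_bool (B \<omega>)) * (1 - of_bool (W \<omega>)) \<partial>M)
       = (\<integral>\<omega>. (of_bool (A \<omega> \<and> \<not> W \<omega>) - of_bool (B \<omega> \<and> \<not> W \<omega>) :: real) \<partial>M)"
      by (rule Bochner_Integration.integral_cong) auto
    also have "\<dots> = \<alpha> - \<beta>"
      using integrable_bool[OF AW] integrable_bool[OF BW] exp_bool[OF AW] exp_bool[OF BW] \<alpha>_def \<beta>_def by simp
    finally show ?thesis .
  qed
  have "cov M (\<lambda>\<omega>. of_bool (Y \<omega>)) (\<lambda>\<omega>. of_bool (Z \<omega>)) = m * (1 - m) * (\<alpha> - \<beta>)"
    unfolding c e1 p2 a1 a2 r1 r2 m_def[symmetric] by (simp add: algebra_simps)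
  then show ?thesis
    unfolding cov_div qW d exp_bool[OF Z] m_def[symmetric] by simp
qed

end

lemma rho_pred:
  assumes C: "finite C" and r: "\<And>d. Measurable.pred M (r d)"
    and loc: "\<And>d d' \<omega>. (\<forall>k\<in>C. d k = d' k) \<Longrightarrow> r d \<omega> = r d' \<omega>"
    and f: "\<And>k. k \<in> C \<Longrightarrow> Measurable.pred M (\<lambda>\<omega>. f \<omega> k)"
  shows "Measurable.pred M (\<lambda>\<omega>. r (f \<omega>) \<omega>)"
proof -
  have eq: "r (f \<omega>) \<omega> = (\<exists>S\<in>Pow C. (\<forall>k\<in>C. f \<omega> k = (k \<in> S)) \<and> r (\<lambda>k. k \<in> S) \<omega>)" for \<omega>
  proof
    assume "r (f \<omega>) \<omega>"
    moreover have "r (f \<omega>) \<omega> = r (\<lambda>k. k \<in> {k\<in>C. f \<omega> k}) \<omega>" by (rule loc) auto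
    ultimately show "\<exists>S\<in>Pow C. (\<forall>k\<in>C. f \<omega> k = (k \<in> S)) \<and> r (\<lambda>k. k \<in> S) \<omega>"
      by (intro bexI[of _ "{k\<in>C. f \<omega> k}"]) auto
  next
    assume "\<exists>S\<in>Pow C. (\<forall>k\<in>C. f \<omega> k = (k \<in> S)) \<and> r (\<lambda>k. k \<in> S) \<omega>"
    then obtain S where "\<forall>k\<in>C. f \<omega> k = (k \<in> S)" "r (\<lambda>k. k \<in> S) \<omega>" by blast
    then show "r (f \<omega>) \<omega>" using loc[of "f \<omega>" "\<lambda>k. k \<in> S" \<omega>] by auto
  qed
  note [measurable] = r f
  have "Measurable.pred M (\<lambda>\<omega>. \<exists>S\<in>Pow C. (\<forall>k\<in>C. f \<omega> k = (k \<in> S)) \<and> r (\<lambda>k. k \<in> S) \<omega>)"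
  proof (rule pred_intros_finite(4))
    show "finite (Pow C)" using C by simp
    fix S
    have "Measurable.pred M (\<lambda>\<omega>. \<forall>k\<in>C. f \<omega> k = (k \<in> S))"
    proof (rule pred_intros_finite(3)[OF C])
      fix k assume k: "k \<in> C"
      have c: "Measurable.pred M (\<lambda>\<omega>. k \<in> S)" by (rule measurable_const) simp
      show "Measurable.pred M (\<lambda>\<omega>. f \<omega> k = (k \<in> S))"
        by (rule pred_intros_logic(6)[OF f[OF k] c])
    qed
    then show "Measurable.pred M (\<lambda>\<omega>. (\<forall>k\<in>C. f \<omega> k = (k \<in> S)) \<and> r (\<lambda>k. k \<in> S) \<omega>)"
      using r by (rule pred_intros_logic(3))
  qed
  then show ?thesis unfolding eq .
qed

lemma sum_lemma:
  fixes m :: "'a \<Rightarrow> real" and c d :: "'a \<Rightarrow> 'a \<Rightarrow> real"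
  assumes finN: "finite N" and edges: "E \<subseteq> {(i, j). i \<in> N \<and> j \<in> N \<and> i \<noteq> j}"
    and vpos: "(1 / real (card N)) * (\<Sum>j\<in>N. m j * (1 - m j)) > 0"
    and ce: "\<And>i j. (i, j) \<in> E \<Longrightarrow> c i j = m j * (1 - m j) * d i j"
  shows "(\<Sum>j\<in>N. m j * (1 - m j) / (\<Sum>l\<in>N. m l * (1 - m l)) * (\<Sum>i\<in>{i\<in>N. (i, j) \<in> E}. d i j))
     = (1 / (real (card N) * ((1 / real (card N)) * (\<Sum>j\<in>N. m j * (1 - m j))))) *
       (\<Sum>i\<in>N. \<Sum>j\<in>{j. (i, j) \<in> E}. c i j)"
proof -
  define S where "S = (\<Sum>j\<in>N. m j * (1 - m j))"
  have cN: "card N > 0" using vpos by (cases "card N = 0") auto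
  have nS: "real (card N) * ((1 / real (card N)) * S) = S" using cN by simp
  have L: "(\<Sum>j\<in>N. m j * (1 - m j) / S * (\<Sum>i\<in>{i\<in>N. (i, j) \<in> E}. d i j))
      = (1 / S) * (\<Sum>j\<in>N. \<Sum>i\<in>N. if (i, j) \<in> E then m j * (1 - m j) * d i j else 0)"
    by (simp add: sum.inter_filter[OF finN] sum_distrib_left sum_distrib_right if_distrib
        if_distribR cong: if_cong)
  have R: "(\<Sum>i\<in>N. \<Sum>j\<in>{j. (i, j) \<in> E}. c i j)
      = (\<Sum>i\<in>N. \<Sum>j\<in>N. if (i, j) \<in> E then m j * (1 - m j) * d i j else 0)"
  proof (rule sum.cong[OF refl])
    fix i assume "i \<in> N"
    have "{j. (i, j) \<in> E} = {j\<in>N. (i, j) \<in> E}" using edges by auto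
    then show "(\<Sum>j\<in>{j. (i, j) \<in> E}. c i j) = (\<Sum>j\<in>N. if (i, j) \<in> E then m j * (1 - m j) * d i j else 0)"
      by (simp add: sum.inter_filter[OF finN] ce cong: if_cong)
  qed
  show ?thesis unfolding S_def[symmetric] nS L R by (rule arg_cong[where f="\<lambda>x. 1 / S * x"], rule sum.swap)
qed

theorem lemma1:
  fixes M :: "'w measure" and N :: "'a set" and E :: "('a \<times> 'a) set"
    and Y0 Y1 :: "'a \<Rightarrow> 'w \<Rightarrow> bool"
    and rho :: "'a \<Rightarrow> ('a \<Rightarrow> bool) \<Rightarrow> 'w \<Rightarrow> bool"
  assumes prob: "prob_space M"
    and finN: "finite N"
    and edges: "E \<subseteq> {(i, j). i \<in> N \<and> j \<in> N \<and> i \<noteq> j}"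
    and Y0_meas: "\<And>j. j \<in> N \<Longrightarrow> Y0 j \<in> measurable M (count_space UNIV)"
    and rho_meas: "\<And>i d. i \<in> N \<Longrightarrow> rho i d \<in> measurable M (count_space UNIV)"
    and rho_local: "\<And>i d d' \<omega>. i \<in> N \<Longrightarrow> (\<forall>k\<in>cnbr E i. d k = d' k) \<Longrightarrow> rho i d \<omega> = rho i d' \<omega>"
    and Y1_def: "\<And>i \<omega>. i \<in> N \<Longrightarrow> \<omega> \<in> space M \<Longrightarrow> Y1 i \<omega> = rho i (\<lambda>j. Y0 j \<omega>) \<omega>"
    and dcg: "dynamic_causal_graph M N E Y1 Y0"
    and vpos: "vsq M N Y0 > 0"
  shows
    "((\<forall>(i, j)\<in>E. indep2 M
          (\<lambda>\<omega>. (ystar rho Y0 i j True \<omega>, ystar rho Y0 i j False \<omega>)) (Y0 j))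
        \<longrightarrow> DD M N E rho Y0 = CG M N E Y1 Y0)
     \<and>
     ((\<forall>(i, j)\<in>E. cond_indep_bool M
          (\<lambda>\<omega>. (ystar rho Y0 i j True \<omega>, ystar rho Y0 i j False \<omega>)) (Y0 j) (Y0 i))
      \<and> (\<forall>i\<in>N. AE \<omega> in M. \<forall>d. d i \<longrightarrow> \<not> rho i d \<omega>)
      \<and> (\<forall>i\<in>N. mu0 M Y0 i < 1)
        \<longrightarrow> DI M N E rho Y0 = CGI M N E Y1 Y0)"
proof -
  interpret prob_space M by (rule prob)
  have Eij: "\<And>i j. (i, j) \<in> E \<Longrightarrow> i \<in> N \<and> j \<in> N \<and> i \<noteq> j" using edges by auto
  have finC: "finite (cnbr E i)" if "i \<in> N" for i
  proof -
    have "cnbr E i \<subseteq> N" using that edges by (auto simp: cnbr_def nbr_def)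
    then show ?thesis using finN by (rule finite_subset)
  qed
  have ysp: "Measurable.pred M (ystar rho Y0 i j d)" if "i \<in> N" for i j d
  proof -
    have "Measurable.pred M (\<lambda>\<omega>. rho i ((\<lambda>k. Y0 k \<omega>)(j := d)) \<omega>)"
    proof (rule rho_pred[OF finC[OF that] rho_meas[OF that] rho_local[OF that]])
      fix k assume k: "k \<in> cnbr E i"
      have kN: "k \<in> N" using k that edges by (auto simp: cnbr_def nbr_def)
      show "Measurable.pred M (\<lambda>\<omega>. ((\<lambda>k. Y0 k \<omega>)(j := d)) k)"
      proof (cases "k = j")
        case True then show ?thesis by simp
      next
        case False then show ?thesis using Y0_meas[OF kN] by simp
      qed
    qed
    then show ?thesis unfolding ystar_def[abs_def] by simp
  qed
  have Y1rel: "Y1 i \<omega> = (if Y0 j \<omega> then ystar rho Y0 i j True \<omega> else ystar rho Y0 i j False \<omega>)"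
    if "(i, j) \<in> E" "\<omega> \<in> space M" for i j \<omega>
  proof -
    have "Y1 i \<omega> = rho i ((\<lambda>k. Y0 k \<omega>)(j := Y0 j \<omega>)) \<omega>"
    proof -
      have "(\<lambda>k. Y0 k \<omega>)(j := Y0 j \<omega>) = (\<lambda>k. Y0 k \<omega>)" by auto
      then show ?thesis using Y1_def[of i \<omega>] Eij[OF that(1)] that(2) by simp
    qed
    then show ?thesis unfolding ystar_def by (cases "Y0 j \<omega>") simp_all
  qed
  have vpos': "(1 / real (card N)) * (\<Sum>j\<in>N. mu0 M Y0 j * (1 - mu0 M Y0 j)) > 0"
    using vpos unfolding vsq_def .
  have partA: "DD M N E rho Y0 = CG M N E Y1 Y0"
    if ind: "\<forall>(i, j)\<in>E. indep2 M (\<lambda>\<omega>. (ystar rho Y0 i j True \<omega>, ystar rho Y0 i j False \<omega>)) (Y0 j)"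
    unfolding DD_def wt_def tau_def CG_def vsq_def
  proof (rule sum_lemma[OF finN edges vpos', where
        c="\<lambda>i j. cov M (\<lambda>\<omega>. of_bool (Y1 i \<omega>)) (\<lambda>\<omega>. of_bool (Y0 j \<omega>))" and
        d="\<lambda>i j. \<integral>\<omega>. of_bool (ystar rho Y0 i j True \<omega>) - of_bool (ystar rho Y0 i j False \<omega>) \<partial>M"])
    fix i j assume ij: "(i, j) \<in> E"
    note N = Eij[OF ij]
    show "cov M (\<lambda>\<omega>. of_bool (Y1 i \<omega>)) (\<lambda>\<omega>. of_bool (Y0 j \<omega>)) = mu0 M Y0 j * (1 - mu0 M Y0 j) *
        (\<integral>\<omega>. of_bool (ystar rho Y0 i j True \<omega>) - of_bool (ystar rho Y0 i j False \<omega>) \<partial>M)"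
      unfolding mu0_def
      by (rule edge_a[OF ysp ysp Y0_meas Y1rel[OF ij]]) (use N ind ij in auto)
  qed
  have partB: "DI M N E rho Y0 = CGI M N E Y1 Y0"
    if ci: "\<forall>(i, j)\<in>E. cond_indep_bool M
          (\<lambda>\<omega>. (ystar rho Y0 i j True \<omega>, ystar rho Y0 i j False \<omega>)) (Y0 j) (Y0 i)"
      and irr: "\<forall>i\<in>N. AE \<omega> in M. \<forall>d. d i \<longrightarrow> \<not> rho i d \<omega>"
      and lt: "\<forall>i\<in>N. mu0 M Y0 i < 1"
    unfolding DI_def wt_def tauI_def CGI_def vsq_def
  proof (rule sum_lemma[OF finN edges vpos', where
        c="\<lambda>i j. cov M (\<lambda>\<omega>. of_bool (Y1 i \<omega>) / (1 - mu0 M Y0 i)) (\<lambda>\<omega>. of_bool (Y0 j \<omega>))" and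
        d="\<lambda>i j. (\<integral>\<omega>. (of_bool (ystar rho Y0 i j True \<omega>) - of_bool (ystar rho Y0 i j False \<omega>))
              * (1 - of_bool (Y0 i \<omega>)) \<partial>M) / (1 - mu0 M Y0 i)"])
    fix i j assume ij: "(i, j) \<in> E"
    note N = Eij[OF ij]
    have irr': "AE \<omega> in M. Y0 i \<omega> \<longrightarrow> \<not> ystar rho Y0 i j True \<omega> \<and> \<not> ystar rho Y0 i j False \<omega>"
      using irr N
    proof -
      have "AE \<omega> in M. \<forall>d. d i \<longrightarrow> \<not> rho i d \<omega>" using irr N by auto
      then show ?thesis
        by (rule AE_mp) (use N in \<open>auto simp: ystar_def\<close>)
    qed
    have iZW: "prob {\<omega>\<in>space M. Y0 j \<omega> \<and> \<not> Y0 i \<omega>} = prob {\<omega>\<in>space M. Y0 j \<omega>} * prob {\<omega>\<in>space M. \<not> Y0 i \<omega>}"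
    proof -
      have "cnbrs E {} = {}" by (simp add: cnbrs_def)
      then have iv: "indep_var
          (count_space UNIV) (\<lambda>\<omega>. (restrict (\<lambda>i. Y1 i \<omega>) {}, restrict (\<lambda>j. Y0 j \<omega>) ({i} \<union> cnbrs E {})))
          (count_space UNIV) (\<lambda>\<omega>. (restrict (\<lambda>i. Y1 i \<omega>) {}, restrict (\<lambda>j. Y0 j \<omega>) ({j} \<union> cnbrs E {})))"
        using dcg[unfolded dynamic_causal_graph_def, rule_format, of "{}" "{i}" "{}" "{j}"] N by auto
      let ?X = "\<lambda>\<omega>. (restrict (\<lambda>i. Y1 i \<omega>) {}, restrict (\<lambda>j. Y0 j \<omega>) ({i} \<union> cnbrs E {}))"
      let ?Z = "\<lambda>\<omega>. (restrict (\<lambda>i. Y1 i \<omega>) {}, restrict (\<lambda>j. Y0 j \<omega>) ({j} \<union> cnbrs E {}))"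
      have a: "?X -` {p. \<not> snd p i} \<inter> space M \<in> sigma_sets (space M) {?X -` A \<inter> space M | A. A \<in> sets (count_space UNIV)}"
        by (rule sigma_sets.Basic, rule CollectI, rule exI, rule conjI[OF refl]) simp
      have b: "?Z -` {p. snd p j} \<inter> space M \<in> sigma_sets (space M) {?Z -` A \<inter> space M | A. A \<in> sets (count_space UNIV)}"
        by (rule sigma_sets.Basic, rule CollectI, rule exI, rule conjI[OF refl]) simp
      have "prob ((?X -` {p. \<not> snd p i} \<inter> space M) \<inter> (?Z -` {p. snd p j} \<inter> space M))
          = prob (?X -` {p. \<not> snd p i} \<inter> space M) * prob (?Z -` {p. snd p j} \<inter> space M)"
        using iv[unfolded indep_var_eq indep_sets2_eq] a b by blast
      moreover have "(?X -` {p. \<not> snd p i} \<inter> space M) \<inter> (?Z -` {p. snd p j} \<inter> space M) = {\<omega>\<in>space M. Y0 j \<omega> \<and> \<not> Y0 i \<omega>}"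
        by auto
      moreover have "?X -` {p. \<not> snd p i} \<inter> space M = {\<omega>\<in>space M. \<not> Y0 i \<omega>}" by auto
      moreover have "?Z -` {p. snd p j} \<inter> space M = {\<omega>\<in>space M. Y0 j \<omega>}" by auto
      ultimately show ?thesis by simp
    qed
    show "cov M (\<lambda>\<omega>. of_bool (Y1 i \<omega>) / (1 - mu0 M Y0 i)) (\<lambda>\<omega>. of_bool (Y0 j \<omega>)) = mu0 M Y0 j * (1 - mu0 M Y0 j) *
        ((\<integral>\<omega>. (of_bool (ystar rho Y0 i j True \<omega>) - of_bool (ystar rho Y0 i j False \<omega>))
              * (1 - of_bool (Y0 i \<omega>)) \<partial>M) / (1 - mu0 M Y0 i))"
      unfolding mu0_def
      by (rule edge_b[OF ysp ysp Y0_meas Y0_meas Y1rel[OF ij] _ irr' iZW])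
         (use N ci lt ij in \<open>auto simp: mu0_def\<close>)
  qed
  show ?thesis using partA partB by blast
qed

end
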